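(* There exists an absolute constant $C>0$ such that the following holds. Let $\mathcal D$ be a distribution on $[0,1]\times\{0,1\}$ and let $S$ be the uniform distribution over $T$ data points $(p_1,y_1),\ldots,(p_T,y_T)$ drawn i.i.d. from $\mathcal D$. For every positive integer $m$, every $i\in\{0,\ldots,m\}$ and every $\delta\in(0,1/(2m))$, with probability at least $1-\delta$, $$|\mathsf{SCFDL}_{m,i}(S)-\mathsf{SCFDL}_{m,i}(\mathcal D)|\le C\Big(\sqrt{\tfrac{\log(1/\delta)}{T}}+(\log m)\sqrt{\tfrac{m\cdot\mathsf{SCDL}_m(\mathcal D)\log(1/\delta)}{T}}+\tfrac{m(\log m)\log(1/\delta)}{T}\Big).$$
   Context: For $x\in\mathbb R$ write $x_+=\max\{x,0\}$. For a distribution $\mathcal D$ of $(p,y)\in[0,1]\times\{0,1\}$ (including the empirical distribution $S$), a positive integer $m$ and $i\in\{0,\ldots,m\}$, let $w_i(p)=(1-|mp-i|)_+$, $\pi_i=\mathbb E_{\mathcal D}[w_i(p)]$ and $q_i=\mathbb E_{\mathcal D}[w_i(p)y]/\pi_i$ (terms with $\pi_i=0$ are $0$). Define $$\mathsf{SCFDL}_{m,i}(\mathcal D)=\sum_{j=0}^{i}\pi_j\big(q_j-\tfrac{i+1}{m}\big)_+ +\sum_{j=i+1}^{m}\pi_j\big(\tfrac im-q_j\big)_+,\qquad \mathsf{SCDL}_m(\mathcal D)=\max_{i=0,\ldots,m}\mathsf{SCFDL}_{m,i}(\mathcal D).$$ *)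

theory Defs
  imports "HOL-Probability.Probability"
begin

text \<open>A distribution on [0,1] x {0,1} is represented as a probability measure on
  real x bool (label y as a boolean, True = 1).  Expectations are abstracted as a
  functional E; for the population distribution E = Lebesgue integral w.r.t. D,
  for the empirical distribution S of the sample E f = (1/T) * sum of f over the sample.\<close>

definition wt :: "nat \<Rightarrow> nat \<Rightarrow> real \<Rightarrow> real" where
  "wt m i p = max (1 - \<bar>real m * p - real i\<bar>) 0"

definition piw :: "(((real \<times> bool) \<Rightarrow> real) \<Rightarrow> real) \<Rightarrow> nat \<Rightarrow> nat \<Rightarrow> real" where
  "piw E m i = E (\<lambda>(p, y). wt m i p)"

definition qw :: "(((real \<times> bool) \<Rightarrow> real) \<Rightarrow> real) \<Rightarrow> nat \<Rightarrow> nat \<Rightarrow> real" where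
  "qw E m i = (if piw E m i = 0 then 0
               else E (\<lambda>(p, y). wt m i p * of_bool y) / piw E m i)"

definition SCFDL :: "(((real \<times> bool) \<Rightarrow> real) \<Rightarrow> real) \<Rightarrow> nat \<Rightarrow> nat \<Rightarrow> real" where
  "SCFDL E m i =
     (\<Sum>j\<in>{0..i}. piw E m j * max (qw E m j - real (i + 1) / real m) 0)
   + (\<Sum>j\<in>{i+1..m}. piw E m j * max (real i / real m - qw E m j) 0)"

definition SCDL :: "(((real \<times> bool) \<Rightarrow> real) \<Rightarrow> real) \<Rightarrow> nat \<Rightarrow> real" where
  "SCDL E m = Max (SCFDL E m ` {0..m})"

definition expD :: "(real \<times> bool) measure \<Rightarrow> ((real \<times> bool) \<Rightarrow> real) \<Rightarrow> real" where
  "expD D f = integral\<^sup>L D f"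

definition expS :: "nat \<Rightarrow> (nat \<Rightarrow> real \<times> bool) \<Rightarrow> ((real \<times> bool) \<Rightarrow> real) \<Rightarrow> real" where
  "expS T xs f = (\<Sum>t<T. f (xs t)) / real T"

end

theory Submission
  imports Defs "HOL-Library.Discrete_Functions"
begin


definition Fw :: "(((real \<times> bool) \<Rightarrow> real) \<Rightarrow> real) \<Rightarrow> nat \<Rightarrow> nat \<Rightarrow> real \<Rightarrow> real" where
  "Fw E m j c = E (\<lambda>(p, y). wt m j p * (of_bool y - c))"

definition Nw :: "(((real \<times> bool) \<Rightarrow> real) \<Rightarrow> real) \<Rightarrow> nat \<Rightarrow> nat \<Rightarrow> real" where
  "Nw E m j = E (\<lambda>(p, y). wt m j p * of_bool y)"

definition goodE :: "(((real \<times> bool) \<Rightarrow> real) \<Rightarrow> real) \<Rightarrow> nat \<Rightarrow> bool" where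
  "goodE E m \<longleftrightarrow> (\<forall>j c. Fw E m j c = Nw E m j - c * piw E m j) \<and>
                  (\<forall>j. 0 \<le> Nw E m j \<and> Nw E m j \<le> piw E m j)"

lemma goodE_piw_nonneg: "goodE E m \<Longrightarrow> 0 \<le> piw E m j"
  unfolding goodE_def by (meson order.trans)

lemma goodE_qw: assumes "goodE E m" shows "0 \<le> qw E m j" "qw E m j \<le> 1"
proof -
  have "0 \<le> Nw E m j" "Nw E m j \<le> piw E m j" using assms unfolding goodE_def by auto
  then show "0 \<le> qw E m j" "qw E m j \<le> 1"
    unfolding qw_def Nw_def by (auto simp: divide_simps)
qed

lemma Fw_eq: assumes "goodE E m" shows "Fw E m j c = piw E m j * (qw E m j - c)"
proof -
  have F: "Fw E m j c = Nw E m j - c * piw E m j" and N: "0 \<le> Nw E m j" "Nw E m j \<le> piw E m j"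
    using assms unfolding goodE_def by auto
  show ?thesis
  proof (cases "piw E m j = 0")
    case True then show ?thesis using F N by simp
  next
    case False
    have "Nw E m j = Fw E m j c + c * piw E m j" using F by simp
    then have "qw E m j = (Fw E m j c + c * piw E m j) / piw E m j"
      using False unfolding qw_def Nw_def by simp
    then show ?thesis using False by (simp add: field_simps)
  qed
qed

lemma mult_max0: "0 \<le> (P::real) \<Longrightarrow> P * max x 0 = max (P * x) 0"
proof (cases "x \<le> 0")
  case True
  assume "0 \<le> P"
  then have "P * x \<le> 0" using True by (simp add: mult_nonneg_nonpos)
  then show ?thesis using True by (simp add: max_def)
next
  case False
  assume "0 \<le> P"
  then have "P * x \<ge> 0" using False by simp
  then show ?thesis using False by (simp add: max_def)
qed

definition cc :: "nat \<Rightarrow> nat \<Rightarrow> nat \<Rightarrow> real" where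
  "cc m i j = (if j \<le> i then real (i + 1) / real m else real i / real m)"

lemma SCFDL_alt: assumes "goodE E m"
  shows "SCFDL E m i = (\<Sum>j\<in>{0..i}. max (Fw E m j (cc m i j)) 0)
                     + (\<Sum>j\<in>{i+1..m}. max (- Fw E m j (cc m i j)) 0)"
proof -
  have P: "0 \<le> piw E m j" for j using goodE_piw_nonneg[OF assms] .
  have 1: "piw E m j * max (qw E m j - c) 0 = max (Fw E m j c) 0" for j c
    using P[of j] by (simp add: Fw_eq[OF assms] mult_max0)
  have 2: "piw E m j * max (c - qw E m j) 0 = max (- Fw E m j c) 0" for j c
    using mult_max0[OF P[of j], of "c - qw E m j"] by (simp add: Fw_eq[OF assms] algebra_simps)
  show ?thesis unfolding SCFDL_def
    by (intro arg_cong2[where f="(+)"] sum.cong) (auto simp: 1 2 cc_def)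
qed

lemma SCFDL_nonneg: assumes "goodE E m" shows "0 \<le> SCFDL E m i"
  unfolding SCFDL_def using goodE_piw_nonneg[OF assms]
  by (intro add_nonneg_nonneg sum_nonneg mult_nonneg_nonneg) auto

lemma SCFDL_le_SCDL: "i \<le> m \<Longrightarrow> SCFDL E m i \<le> SCDL E m"
  unfolding SCDL_def by (intro Max_ge) auto

lemma SCDL_nonneg: "goodE E m \<Longrightarrow> 0 \<le> SCDL E m"
  using SCFDL_le_SCDL[of 0 m E] SCFDL_nonneg[of E m 0] by auto

lemma SCFDL_m1: assumes "goodE E 1" "i \<le> 1" shows "SCFDL E 1 i = 0"
proof -
  have q: "0 \<le> qw E 1 j" "qw E 1 j \<le> 1" for j using goodE_qw[OF assms(1)] by auto
  show ?thesis using assms(2) q[of 0] q[of 1]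
    by (cases i) (auto simp: SCFDL_def max_def)
qed



lemma err_pos: fixes x1 x2 e :: real assumes "\<bar>x1 - x2\<bar> \<le> e"
  shows "\<bar>max x1 0 - max x2 0\<bar> \<le> max 0 (e - max 0 (- x2))"
  using assms by (auto simp: max_def abs_if)

lemma amgm: fixes x y :: real assumes "0 \<le> x" "0 \<le> y" shows "sqrt (x * y) \<le> (x + y) / 2"
  using arith_geo_mean_sqrt[OF assms] .

lemma key_scalar:
  fixes p a b D d v X :: real
  assumes p: "0 \<le> p" and a: "0 < a" and b: "0 \<le> b" and D: "0 < D" and d: "0 \<le> d" and v: "0 < v"
    and X: "p * (D - d) \<le> X"
  shows "max 0 (sqrt (p * a) + b - max 0 X) \<le> b + a / (2 * D) + a / (2 * D * v) + v * p * d"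
proof (cases "D \<le> 2 * d")
  case True
  have "sqrt (p * a) = sqrt ((p * D * v) * (a / (D * v)))"
    using D v by (simp add: field_simps)
  also have "\<dots> \<le> (p * D * v + a / (D * v)) / 2"
    by (rule amgm) (use p D v a in auto)
  also have "\<dots> \<le> v * p * d + a / (2 * D * v)"
  proof -
    have "p * D * v \<le> p * (2 * d) * v" using True p v by (intro mult_right_mono mult_left_mono) auto
    then show ?thesis by (simp add: field_simps)
  qed
  finally have "sqrt (p * a) \<le> v * p * d + a / (2 * D * v)" .
  moreover have "0 \<le> a / (2 * D)" using a D by simp
  moreover have "0 \<le> a / (2 * D * v)" using a D v by simp
  moreover have "0 \<le> v * p * d" using v p d by simp
  ultimately show ?thesis using b by (auto simp: max_def)
next
  case False
  have "D / 2 \<le> D - d" using False by linarith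
  then have "p * (D / 2) \<le> p * (D - d)" using p by (rule mult_left_mono)
  then have "p * D / 2 \<le> p * (D - d)" by simp
  then have X2: "p * D / 2 \<le> X" using X by linarith
  have "sqrt (p * a) = sqrt ((p * D) * (a / D))" using D by (simp add: field_simps)
  also have "\<dots> \<le> (p * D + a / D) / 2" by (rule amgm) (use p D a in auto)
  finally have "sqrt (p * a) - p * D / 2 \<le> a / (2 * D)" by (simp add: field_simps)
  moreover have "0 \<le> a / (2 * D * v)" using a D v by simp
  moreover have "0 \<le> v * p * d" using v p d by simp
  moreover have "0 \<le> a / (2 * D)" using a D by simp
  ultimately show ?thesis using b X2 by (auto simp: max_def)
qed

lemma harm_ln: "(\<Sum>k\<in>{2..n}. 1 / real k) \<le> ln (real n)"
proof (induction n)
  case 0 then show ?case by simp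
next
  case (Suc n)
  show ?case
  proof (cases "n = 0")
    case True then show ?thesis by simp
  next
    case False
    have "{2..Suc n} = insert (Suc n) {2..n}" using False by auto
    then have "(\<Sum>k\<in>{2..Suc n}. 1 / real k) = 1 / real (Suc n) + (\<Sum>k\<in>{2..n}. 1 / real k)" by simp
    also have "\<dots> \<le> 1 / real (Suc n) + ln (real n)" using Suc.IH by simp
    also have "\<dots> \<le> ln (real (Suc n))"
    proof -
      have "ln (real n / real (Suc n)) \<le> real n / real (Suc n) - 1"
        using False by (intro ln_le_minus_one) auto
      also have "\<dots> = - (1 / real (Suc n))" by (simp add: field_simps)
      finally have A: "ln (real n / real (Suc n)) \<le> - (1 / real (Suc n))" .
      have "ln (real n / real (Suc n)) = ln (real n) - ln (real (Suc n))"
        using False by (subst ln_div) auto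
      with A show ?thesis by linarith
    qed
    finally show ?thesis .
  qed
qed

definition hh :: "nat \<Rightarrow> nat" where "hh k = 2 ^ (floor_log k - 1)"

lemma floor_log_2: "floor_log 2 = 1" by (simp add: floor_log_rec)

lemma hh_props: assumes "2 \<le> k"
  shows "1 \<le> hh k" "2 * hh k \<le> k" "k < 4 * hh k"
proof -
  have fl: "1 \<le> floor_log k" using floor_log_le_iff[OF assms] by (simp add: floor_log_2)
  have e: "2 * hh k = 2 ^ floor_log k" unfolding hh_def using fl
    by (metis Suc_diff_le diff_Suc_1 power_Suc)
  show "1 \<le> hh k" unfolding hh_def by simp
  show "2 * hh k \<le> k" using e floor_log_exp2_le[of k] assms by simp
  show "k < 4 * hh k" using e floor_log_exp2_gt[of k] by simp
qed

lemma card_hh: assumes "1 \<le> m" shows "real (card (hh ` {2..m})) \<le> 2 * ln (real m)"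
proof -
  have sub: "hh ` {2..m} \<subseteq> (\<lambda>r. 2 ^ r) ` {..<floor_log m}"
  proof
    fix x assume "x \<in> hh ` {2..m}"
    then obtain k where k: "k \<in> {2..m}" "x = hh k" by auto
    have "1 \<le> floor_log k" using floor_log_le_iff[of 2 k] k by (simp add: floor_log_2)
    moreover have "floor_log k \<le> floor_log m" using k by (intro floor_log_le_iff) auto
    ultimately have "floor_log k - 1 < floor_log m" by linarith
    then show "x \<in> (\<lambda>r. 2 ^ r) ` {..<floor_log m}" using k unfolding hh_def by auto
  qed
  have "card (hh ` {2..m}) \<le> card ((\<lambda>r. (2::nat) ^ r) ` {..<floor_log m})"
    by (intro card_mono sub) auto
  also have "\<dots> \<le> floor_log m" using card_image_le[of "{..<floor_log m}" "\<lambda>r. (2::nat) ^ r"] by simp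
  finally have c: "card (hh ` {2..m}) \<le> floor_log m" .
  have "2 ^ floor_log m \<le> m" using floor_log_exp2_le[of m] assms by simp
  then have "(2::real) ^ floor_log m \<le> real m"
    by (metis of_nat_le_iff of_nat_numeral of_nat_power)
  then have "ln ((2::real) ^ floor_log m) \<le> ln (real m)" using assms by (subst ln_le_cancel_iff) auto
  then have l: "real (floor_log m) * ln 2 \<le> ln (real m)" by (simp add: ln_realpow)
  have "ln (1/2::real) \<le> 1/2 - 1" by (intro ln_le_minus_one) auto
  then have l2: "1/2 \<le> ln (2::real)" by (simp add: ln_div)
  have "real (floor_log m) \<le> 2 * ln (real m)"
  proof -
    have "real (floor_log m) * (1/2) \<le> real (floor_log m) * ln 2" using l2 by (intro mult_left_mono) auto
    then show ?thesis using l by linarith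
  qed
  then show ?thesis using c by linarith
qed



lemma PL_group:
  assumes g: "goodE E m" and i: "i \<le> m"
  shows "(\<Sum>j\<in>{j\<in>{0..m}. j + 2 \<le> i}. piw E m j * max (qw E m j - real (i - hh (i - j) + 1) / real m) 0)
         \<le> real (card (hh ` {2..m})) * SCDL E m"
proof -
  let ?PL = "{j\<in>{0..m}. j + 2 \<le> i}"
  let ?H = "hh ` {2..m}"
  let ?f = "\<lambda>j. piw E m j * max (qw E m j - real (i - hh (i - j) + 1) / real m) 0"
  have P: "0 \<le> piw E m j" for j using goodE_piw_nonneg[OF g] .
  have "(\<Sum>j\<in>?PL. ?f j) = (\<Sum>h\<in>?H. \<Sum>j\<in>{j. j \<in> ?PL \<and> hh (i - j) = h}. ?f j)"
    by (rule sum.group[symmetric]) (use i in \<open>auto intro!: imageI\<close>)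
  also have "\<dots> \<le> (\<Sum>h\<in>?H. SCDL E m)"
  proof (rule sum_mono)
    fix h assume h: "h \<in> ?H"
    let ?F = "{j. j \<in> ?PL \<and> hh (i - j) = h}"
    have "(\<Sum>j\<in>?F. ?f j) = (\<Sum>j\<in>?F. piw E m j * max (qw E m j - real ((i - h) + 1) / real m) 0)"
      by (intro sum.cong) auto
    also have "\<dots> \<le> (\<Sum>j\<in>{0..i - h}. piw E m j * max (qw E m j - real ((i - h) + 1) / real m) 0)"
    proof (rule sum_mono2)
      show "?F \<subseteq> {0..i - h}"
      proof
        fix j assume j: "j \<in> ?F"
        then have "2 * hh (i - j) \<le> i - j" using hh_props(2)[of "i - j"] by auto
        then show "j \<in> {0..i - h}" using j by auto
      qed
    qed (use P in auto)
    also have "\<dots> \<le> SCFDL E m (i - h)"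
      unfolding SCFDL_def using P by (intro add_increasing2 sum_nonneg mult_nonneg_nonneg) auto
    also have "\<dots> \<le> SCDL E m" using i by (intro SCFDL_le_SCDL) auto
    finally show "(\<Sum>j\<in>?F. ?f j) \<le> SCDL E m" .
  qed
  also have "\<dots> = real (card ?H) * SCDL E m" by simp
  finally show ?thesis .
qed

lemma PR_group:
  assumes g: "goodE E m" and i: "i \<le> m"
  shows "(\<Sum>j\<in>{j\<in>{0..m}. i + 2 \<le> j}. piw E m j * max (real (i + hh (j - i)) / real m - qw E m j) 0)
         \<le> real (card (hh ` {2..m})) * SCDL E m"
proof -
  let ?PR = "{j\<in>{0..m}. i + 2 \<le> j}"
  let ?H = "hh ` {2..m}"
  let ?f = "\<lambda>j. piw E m j * max (real (i + hh (j - i)) / real m - qw E m j) 0"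
  have P: "0 \<le> piw E m j" for j using goodE_piw_nonneg[OF g] .
  have "(\<Sum>j\<in>?PR. ?f j) = (\<Sum>h\<in>?H. \<Sum>j\<in>{j. j \<in> ?PR \<and> hh (j - i) = h}. ?f j)"
    by (rule sum.group[symmetric]) (use i in \<open>auto intro!: imageI\<close>)
  also have "\<dots> \<le> (\<Sum>h\<in>?H. SCDL E m)"
  proof (rule sum_mono)
    fix h assume h: "h \<in> ?H"
    let ?F = "{j. j \<in> ?PR \<and> hh (j - i) = h}"
    show "(\<Sum>j\<in>?F. ?f j) \<le> SCDL E m"
    proof (cases "?F = {}")
      case True then show ?thesis using SCDL_nonneg[OF g] by (simp only: True sum.empty)
    next
      case False
      then obtain j0 where j0: "j0 \<in> ?F" by auto
      then have "2 * hh (j0 - i) \<le> j0 - i" using hh_props(2)[of "j0 - i"] by auto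
      moreover have "1 \<le> hh (j0 - i)" using j0 hh_props(1)[of "j0 - i"] by auto
      ultimately have ihm: "i + h \<le> m" using j0 by auto
      have "(\<Sum>j\<in>?F. ?f j) = (\<Sum>j\<in>?F. piw E m j * max (real (i + h) / real m - qw E m j) 0)"
        by (intro sum.cong) auto
      also have "\<dots> \<le> (\<Sum>j\<in>{i + h + 1..m}. piw E m j * max (real (i + h) / real m - qw E m j) 0)"
      proof (rule sum_mono2)
        show "?F \<subseteq> {i + h + 1..m}"
        proof
          fix j assume j: "j \<in> ?F"
          then have "2 * hh (j - i) \<le> j - i" "1 \<le> hh (j - i)" using hh_props[of "j - i"] by auto
          then show "j \<in> {i + h + 1..m}" using j by auto
        qed
      qed (use P in auto)
      also have "\<dots> \<le> SCFDL E m (i + h)"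
        unfolding SCFDL_def using P by (intro add_increasing sum_nonneg mult_nonneg_nonneg) auto
      also have "\<dots> \<le> SCDL E m" using ihm by (intro SCFDL_le_SCDL) auto
      finally show ?thesis .
    qed
  qed
  also have "\<dots> = real (card ?H) * SCDL E m" by simp
  finally show ?thesis .
qed

lemma PL_harm: "(\<Sum>j\<in>{j\<in>{0..m}. j + 2 \<le> i}. 1 / real (i - j)) \<le> ln (real i)" if "i \<le> m"
proof -
  have "(\<Sum>j\<in>{j\<in>{0..m}. j + 2 \<le> i}. 1 / real (i - j)) = (\<Sum>k\<in>{2..i}. 1 / real k)"
    by (rule sum.reindex_bij_witness[where i="\<lambda>k. i - k" and j="\<lambda>j. i - j"]) (use that in auto)
  then show ?thesis using harm_ln[of i] by simp
qed

lemma PR_harm: "(\<Sum>j\<in>{j\<in>{0..m}. i + 2 \<le> j}. 1 / real (j - i)) \<le> ln (real (m - i))" if "i \<le> m"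
proof -
  have "(\<Sum>j\<in>{j\<in>{0..m}. i + 2 \<le> j}. 1 / real (j - i)) = (\<Sum>k\<in>{2..m - i}. 1 / real k)"
    by (rule sum.reindex_bij_witness[where i="\<lambda>k. k + i" and j="\<lambda>j. j - i"]) (use that in auto)
  then show ?thesis using harm_ln[of "m - i"] by simp
qed



lemma SCFDL_sum: assumes g: "goodE E m" and i: "i \<le> m"
  shows "SCFDL E m i = (\<Sum>j\<in>{0..m}. max (if j \<le> i then Fw E m j (cc m i j) else - Fw E m j (cc m i j)) 0)"
proof -
  have u: "{0..m} = {0..i} \<union> {i+1..m}" using i by auto
  have "(\<Sum>j\<in>{0..m}. max (if j \<le> i then Fw E m j (cc m i j) else - Fw E m j (cc m i j)) 0)
     = (\<Sum>j\<in>{0..i}. max (if j \<le> i then Fw E m j (cc m i j) else - Fw E m j (cc m i j)) 0)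
     + (\<Sum>j\<in>{i+1..m}. max (if j \<le> i then Fw E m j (cc m i j) else - Fw E m j (cc m i j)) 0)"
    unfolding u by (rule sum.union_disjoint) auto
  also have "\<dots> = SCFDL E m i" unfolding SCFDL_alt[OF g]
    by (intro arg_cong2[where f="(+)"] sum.cong) auto
  finally show ?thesis by simp
qed

lemma per_j:
  fixes p a b v X Q :: real and h k m :: nat
  assumes p: "0 \<le> p" and a: "0 < a" and b: "0 \<le> b" and v: "0 < v" and m: "1 \<le> m"
    and k: "2 \<le> k" and h: "h = hh k" and d: "0 \<le> d"
    and X: "p * (real h / real m - d) \<le> X"
  shows "max 0 (sqrt (p * a) + b - max 0 X) \<le> b + (2 * a * real m * (1 + 1 / v)) * (1 / real k) + v * (p * d)"
proof -
  have h1: "1 \<le> h" and hk: "k < 4 * h" using hh_props[OF k] h by auto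
  have D: "0 < real h / real m" using h1 m by simp
  have 1: "max 0 (sqrt (p * a) + b - max 0 X) \<le> b + a / (2 * (real h / real m)) + a / (2 * (real h / real m) * v) + v * p * d"
    by (rule key_scalar[OF p a b D d v X])
  have 2: "a / (2 * (real h / real m)) + a / (2 * (real h / real m) * v) = (a * real m * (1 + 1 / v)) * (1 / (2 * real h))"
    using h1 m v by (simp add: field_simps)
  have 3: "(a * real m * (1 + 1 / v)) * (1 / (2 * real h)) \<le> (a * real m * (1 + 1 / v)) * (2 * (1 / real k))"
  proof (rule mult_left_mono)
    have "real k < 4 * real h" using hk by linarith
    then show "1 / (2 * real h) \<le> 2 * (1 / real k)" using h1 k by (simp add: field_simps)
    show "0 \<le> a * real m * (1 + 1 / v)" using a v by simp
  qed
  have 4: "(a * real m * (1 + 1 / v)) * (2 * (1 / real k)) = (2 * a * real m * (1 + 1 / v)) * (1 / real k)" by simp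
  have 5: "v * p * d = v * (p * d)" by simp
  show ?thesis using 1 2 3 4 5 by linarith
qed


lemma det_v:
  assumes g1: "goodE E1 m" and g2: "goodE E2 m" and m: "2 \<le> m" and i: "i \<le> m"
    and a: "0 < a" and b: "0 \<le> b" and v: "0 < v"
    and P1: "\<And>j. piw E2 m j \<le> 1"
    and dev: "\<And>j. j \<le> m \<Longrightarrow> \<bar>Fw E1 m j (cc m i j) - Fw E2 m j (cc m i j)\<bar> \<le> sqrt (piw E2 m j * a) + b"
  shows "\<bar>SCFDL E1 m i - SCFDL E2 m i\<bar> \<le> 3 * (sqrt a + b) + real (m + 1) * b
           + 4 * a * real m * (1 + 1 / v) * ln (real m) + 4 * v * ln (real m) * SCDL E2 m"
proof -
  define x1 where "x1 j = (if j \<le> i then Fw E1 m j (cc m i j) else - Fw E1 m j (cc m i j))" for j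
  define x2 where "x2 j = (if j \<le> i then Fw E2 m j (cc m i j) else - Fw E2 m j (cc m i j))" for j
  define eps where "eps j = sqrt (piw E2 m j * a) + b" for j
  define EB where "EB j = max 0 (eps j - max 0 (- x2 j))" for j
  define P where "P j = piw E2 m j" for j
  define Q where "Q j = qw E2 m j" for j
  define s where "s = SCDL E2 m"
  define K where "K = 2 * a * real m * (1 + 1 / v)"
  have P0: "0 \<le> P j" for j unfolding P_def using goodE_piw_nonneg[OF g2] .
  have s0: "0 \<le> s" unfolding s_def using SCDL_nonneg[OF g2] .
  have lnm: "0 \<le> ln (real m)" using m by simp
  have K0: "0 \<le> K" unfolding K_def using a v by simp
  have "SCFDL E1 m i - SCFDL E2 m i = (\<Sum>j\<in>{0..m}. max (x1 j) 0 - max (x2 j) 0)"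
    unfolding SCFDL_sum[OF g1 i] SCFDL_sum[OF g2 i] x1_def x2_def by (simp add: sum_subtractf)
  then have "\<bar>SCFDL E1 m i - SCFDL E2 m i\<bar> \<le> (\<Sum>j\<in>{0..m}. \<bar>max (x1 j) 0 - max (x2 j) 0\<bar>)"
    by (simp add: sum_abs)
  also have "\<dots> \<le> (\<Sum>j\<in>{0..m}. EB j)"
  proof (rule sum_mono)
    fix j assume j: "j \<in> {0..m}"
    have "\<bar>x1 j - x2 j\<bar> \<le> eps j" using dev[of j] j unfolding x1_def x2_def eps_def by (auto simp: abs_minus_commute)
    then show "\<bar>max (x1 j) 0 - max (x2 j) 0\<bar> \<le> EB j" unfolding EB_def by (rule err_pos)
  qed
  finally have T1: "\<bar>SCFDL E1 m i - SCFDL E2 m i\<bar> \<le> (\<Sum>j\<in>{0..m}. EB j)" .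
  have T2: "(\<Sum>j\<in>{0..m}. EB j) = (\<Sum>j\<in>{j\<in>{0..m}. i < j + 2 \<and> j < i + 2}. EB j)
       + (\<Sum>j\<in>{j\<in>{0..m}. j + 2 \<le> i}. EB j) + (\<Sum>j\<in>{j\<in>{0..m}. i + 2 \<le> j}. EB j)"
  proof -
    have u: "{0..m} = ({j\<in>{0..m}. i < j + 2 \<and> j < i + 2} \<union> {j\<in>{0..m}. j + 2 \<le> i}) \<union> {j\<in>{0..m}. i + 2 \<le> j}"
      by auto
    have "(\<Sum>j\<in>{0..m}. EB j) = (\<Sum>j\<in>{j\<in>{0..m}. i < j + 2 \<and> j < i + 2} \<union> {j\<in>{0..m}. j + 2 \<le> i}. EB j) + (\<Sum>j\<in>{j\<in>{0..m}. i + 2 \<le> j}. EB j)"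
      by (subst u, rule sum.union_disjoint) auto
    also have "(\<Sum>j\<in>{j\<in>{0..m}. i < j + 2 \<and> j < i + 2} \<union> {j\<in>{0..m}. j + 2 \<le> i}. EB j) = (\<Sum>j\<in>{j\<in>{0..m}. i < j + 2 \<and> j < i + 2}. EB j) + (\<Sum>j\<in>{j\<in>{0..m}. j + 2 \<le> i}. EB j)"
      by (rule sum.union_disjoint) auto
    finally show ?thesis .
  qed
  have TA: "(\<Sum>j\<in>{j\<in>{0..m}. i < j + 2 \<and> j < i + 2}. EB j) \<le> 3 * (sqrt a + b)"
  proof -
    have EBle: "EB j \<le> sqrt a + b" for j
    proof -
      have "sqrt (P j * a) \<le> sqrt (1 * a)" using P1[of j] a unfolding P_def
        by (intro real_sqrt_le_mono mult_right_mono) auto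
      then have "eps j \<le> sqrt a + b" unfolding eps_def P_def by simp
      moreover have "0 \<le> eps j" unfolding eps_def using b a goodE_piw_nonneg[OF g2, of j] by simp
      ultimately show ?thesis unfolding EB_def by (auto simp: max_def)
    qed
    have sub: "{j\<in>{0..m}. i < j + 2 \<and> j < i + 2} \<subseteq> {i - 1, i, i + 1}" by auto
    have c: "card {j\<in>{0..m}. i < j + 2 \<and> j < i + 2} \<le> 3"
    proof -
      have "card {j\<in>{0..m}. i < j + 2 \<and> j < i + 2} \<le> card {i - 1, i, i + 1}" by (rule card_mono[OF _ sub]) auto
      also have "card {i - 1, i, i + 1} \<le> 3" by (auto simp: card_insert_if)
      finally show ?thesis .
    qed
    have "(\<Sum>j\<in>{j\<in>{0..m}. i < j + 2 \<and> j < i + 2}. EB j) \<le> real (card {j\<in>{0..m}. i < j + 2 \<and> j < i + 2}) * (sqrt a + b)"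
      using sum_bounded_above[of "{j\<in>{0..m}. i < j + 2 \<and> j < i + 2}" EB "sqrt a + b"] EBle by auto
    also have "\<dots> \<le> 3 * (sqrt a + b)" using c a b by (intro mult_right_mono) auto
    finally show ?thesis .
  qed
  have TB: "(\<Sum>j\<in>{j\<in>{0..m}. j + 2 \<le> i}. EB j) \<le> (\<Sum>j\<in>{j\<in>{0..m}. j + 2 \<le> i}.
          b + K * (1 / real (i - j)) + v * (P j * max (Q j - real (i - hh (i - j) + 1) / real m) 0))"
  proof (rule sum_mono)
    fix j assume j: "j \<in> {j\<in>{0..m}. j + 2 \<le> i}"
    define h where "h = hh (i - j)"
    have hk: "2 * h \<le> i - j" using hh_props(2)[of "i - j"] j unfolding h_def by auto
    have X: "P j * (real h / real m - max (Q j - real (i - h + 1) / real m) 0) \<le> - x2 j"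
    proof -
      have x2: "- x2 j = P j * (real (i + 1) / real m - Q j)"
        using j unfolding x2_def P_def Q_def by (simp add: Fw_eq[OF g2] cc_def algebra_simps)
      have r: "real (i - h + 1) = real i - real h + 1" using hk by (simp add: of_nat_diff)
      have e: "real h / real m - (Q j - (real i - real h + 1) / real m) = real (i + 1) / real m - Q j"
        using m by (simp add: field_simps)
      have "Q j - (real i - real h + 1) / real m \<le> max (Q j - (real i - real h + 1) / real m) 0" by simp
      then have "real h / real m - max (Q j - real (i - h + 1) / real m) 0 \<le> real (i + 1) / real m - Q j"
        using e unfolding r by linarith
      then show ?thesis unfolding x2 using P0[of j] by (rule mult_left_mono)
    qed
    show "EB j \<le> b + K * (1 / real (i - j)) + v * (P j * max (Q j - real (i - hh (i - j) + 1) / real m) 0)"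
      unfolding EB_def eps_def K_def h_def[symmetric] P_def[symmetric]
      by (rule per_j[OF P0 a b v _ _ h_def _ X]) (use m j in auto)
  qed
  have TC: "(\<Sum>j\<in>{j\<in>{0..m}. i + 2 \<le> j}. EB j) \<le> (\<Sum>j\<in>{j\<in>{0..m}. i + 2 \<le> j}.
          b + K * (1 / real (j - i)) + v * (P j * max (real (i + hh (j - i)) / real m - Q j) 0))"
  proof (rule sum_mono)
    fix j assume j: "j \<in> {j\<in>{0..m}. i + 2 \<le> j}"
    define h where "h = hh (j - i)"
    have X: "P j * (real h / real m - max (real (i + h) / real m - Q j) 0) \<le> - x2 j"
    proof -
      have x2: "- x2 j = P j * (Q j - real i / real m)"
        using j unfolding x2_def P_def Q_def by (simp add: Fw_eq[OF g2] cc_def algebra_simps)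
      have e: "real h / real m - (real (i + h) / real m - Q j) = Q j - real i / real m"
        using m by (simp add: field_simps)
      have "real (i + h) / real m - Q j \<le> max (real (i + h) / real m - Q j) 0" by simp
      then have "real h / real m - max (real (i + h) / real m - Q j) 0 \<le> Q j - real i / real m"
        using e by linarith
      then show ?thesis unfolding x2 using P0[of j] by (rule mult_left_mono)
    qed
    show "EB j \<le> b + K * (1 / real (j - i)) + v * (P j * max (real (i + hh (j - i)) / real m - Q j) 0)"
      unfolding EB_def eps_def K_def h_def[symmetric] P_def[symmetric]
      by (rule per_j[OF P0 a b v _ _ h_def _ X]) (use m j in auto)
  qed
  have TB2: "(\<Sum>j\<in>{j\<in>{0..m}. j + 2 \<le> i}. b + K * (1 / real (i - j)) + v * (P j * max (Q j - real (i - hh (i - j) + 1) / real m) 0))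
     \<le> real (card {j\<in>{0..m}. j + 2 \<le> i}) * b + K * ln (real m) + v * (2 * ln (real m) * s)"
  proof -
    have "(\<Sum>j\<in>{j\<in>{0..m}. j + 2 \<le> i}. b + K * (1 / real (i - j)) + v * (P j * max (Q j - real (i - hh (i - j) + 1) / real m) 0))
       = real (card {j\<in>{0..m}. j + 2 \<le> i}) * b + K * (\<Sum>j\<in>{j\<in>{0..m}. j + 2 \<le> i}. 1 / real (i - j))
         + v * (\<Sum>j\<in>{j\<in>{0..m}. j + 2 \<le> i}. P j * max (Q j - real (i - hh (i - j) + 1) / real m) 0)"
      by (simp add: sum.distrib sum_distrib_left)
    moreover have "K * (\<Sum>j\<in>{j\<in>{0..m}. j + 2 \<le> i}. 1 / real (i - j)) \<le> K * ln (real m)"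
    proof (rule mult_left_mono[OF _ K0])
      have "(\<Sum>j\<in>{j\<in>{0..m}. j + 2 \<le> i}. 1 / real (i - j)) \<le> ln (real i)" by (rule PL_harm[OF i])
      also have "\<dots> \<le> ln (real m)" using i m by (cases "i = 0") auto
      finally show "(\<Sum>j\<in>{j\<in>{0..m}. j + 2 \<le> i}. 1 / real (i - j)) \<le> ln (real m)" .
    qed
    moreover have "v * (\<Sum>j\<in>{j\<in>{0..m}. j + 2 \<le> i}. P j * max (Q j - real (i - hh (i - j) + 1) / real m) 0)
        \<le> v * (2 * ln (real m) * s)"
    proof (rule mult_left_mono)
      have "(\<Sum>j\<in>{j\<in>{0..m}. j + 2 \<le> i}. P j * max (Q j - real (i - hh (i - j) + 1) / real m) 0)
         \<le> real (card (hh ` {2..m})) * s" unfolding P_def Q_def s_def by (rule PL_group[OF g2 i])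
      also have "\<dots> \<le> 2 * ln (real m) * s" using card_hh[of m] m s0 by (intro mult_right_mono) auto
      finally show "(\<Sum>j\<in>{j\<in>{0..m}. j + 2 \<le> i}. P j * max (Q j - real (i - hh (i - j) + 1) / real m) 0) \<le> 2 * ln (real m) * s" .
    qed (use v in auto)
    ultimately show ?thesis by linarith
  qed
  have TC2: "(\<Sum>j\<in>{j\<in>{0..m}. i + 2 \<le> j}. b + K * (1 / real (j - i)) + v * (P j * max (real (i + hh (j - i)) / real m - Q j) 0))
     \<le> real (card {j\<in>{0..m}. i + 2 \<le> j}) * b + K * ln (real m) + v * (2 * ln (real m) * s)"
  proof -
    have "(\<Sum>j\<in>{j\<in>{0..m}. i + 2 \<le> j}. b + K * (1 / real (j - i)) + v * (P j * max (real (i + hh (j - i)) / real m - Q j) 0))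
       = real (card {j\<in>{0..m}. i + 2 \<le> j}) * b + K * (\<Sum>j\<in>{j\<in>{0..m}. i + 2 \<le> j}. 1 / real (j - i))
         + v * (\<Sum>j\<in>{j\<in>{0..m}. i + 2 \<le> j}. P j * max (real (i + hh (j - i)) / real m - Q j) 0)"
      by (simp add: sum.distrib sum_distrib_left)
    moreover have "K * (\<Sum>j\<in>{j\<in>{0..m}. i + 2 \<le> j}. 1 / real (j - i)) \<le> K * ln (real m)"
    proof (rule mult_left_mono[OF _ K0])
      have "(\<Sum>j\<in>{j\<in>{0..m}. i + 2 \<le> j}. 1 / real (j - i)) \<le> ln (real (m - i))" by (rule PR_harm[OF i])
      also have "\<dots> \<le> ln (real m)" using i m by (cases "m - i = 0") auto
      finally show "(\<Sum>j\<in>{j\<in>{0..m}. i + 2 \<le> j}. 1 / real (j - i)) \<le> ln (real m)" .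
    qed
    moreover have "v * (\<Sum>j\<in>{j\<in>{0..m}. i + 2 \<le> j}. P j * max (real (i + hh (j - i)) / real m - Q j) 0)
        \<le> v * (2 * ln (real m) * s)"
    proof (rule mult_left_mono)
      have "(\<Sum>j\<in>{j\<in>{0..m}. i + 2 \<le> j}. P j * max (real (i + hh (j - i)) / real m - Q j) 0)
         \<le> real (card (hh ` {2..m})) * s" unfolding P_def Q_def s_def by (rule PR_group[OF g2 i])
      also have "\<dots> \<le> 2 * ln (real m) * s" using card_hh[of m] m s0 by (intro mult_right_mono) auto
      finally show "(\<Sum>j\<in>{j\<in>{0..m}. i + 2 \<le> j}. P j * max (real (i + hh (j - i)) / real m - Q j) 0) \<le> 2 * ln (real m) * s" .
    qed (use v in auto)
    ultimately show ?thesis by linarith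
  qed
  have F: "\<bar>SCFDL E1 m i - SCFDL E2 m i\<bar> \<le> 3 * (sqrt a + b) +
      (real (card {j\<in>{0..m}. j + 2 \<le> i}) * b + K * ln (real m) + v * (2 * ln (real m) * s)) +
      (real (card {j\<in>{0..m}. i + 2 \<le> j}) * b + K * ln (real m) + v * (2 * ln (real m) * s))"
    using T1 T2 TA TB TB2 TC TC2 by linarith
  have "card {j\<in>{0..m}. j + 2 \<le> i} + card {j\<in>{0..m}. i + 2 \<le> j} = card ({j\<in>{0..m}. j + 2 \<le> i} \<union> {j\<in>{0..m}. i + 2 \<le> j})"
    by (rule card_Un_disjoint[symmetric]) auto
  also have "\<dots> \<le> card {0..m}" by (rule card_mono) auto
  also have "\<dots> = m + 1" by simp
  finally have cc: "card {j\<in>{0..m}. j + 2 \<le> i} + card {j\<in>{0..m}. i + 2 \<le> j} \<le> m + 1" .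
  then have "real (card {j\<in>{0..m}. j + 2 \<le> i} + card {j\<in>{0..m}. i + 2 \<le> j}) \<le> real (m + 1)"
    by (simp only: of_nat_le_iff)
  then have "real (card {j\<in>{0..m}. j + 2 \<le> i}) + real (card {j\<in>{0..m}. i + 2 \<le> j}) \<le> real (m + 1)"
    by (simp only: of_nat_add)
  then have "(real (card {j\<in>{0..m}. j + 2 \<le> i}) + real (card {j\<in>{0..m}. i + 2 \<le> j})) * b \<le> real (m + 1) * b"
    using b by (rule mult_right_mono)
  then have c2: "real (card {j\<in>{0..m}. j + 2 \<le> i}) * b + real (card {j\<in>{0..m}. i + 2 \<le> j}) * b \<le> real (m + 1) * b"
    by (simp add: distrib_right)
  have e1: "K * ln (real m) + K * ln (real m) = 4 * a * real m * (1 + 1 / v) * ln (real m)"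
    unfolding K_def by simp
  have e2: "v * (2 * ln (real m) * s) + v * (2 * ln (real m) * s) = 4 * v * ln (real m) * SCDL E2 m"
    unfolding s_def by simp
  show ?thesis using F c2 e1 e2 by linarith
qed


lemma det_final:
  assumes g1: "goodE E1 m" and g2: "goodE E2 m" and m: "2 \<le> m" and i: "i \<le> m"
    and a: "0 < a" and b: "0 \<le> b"
    and P1: "\<And>j. piw E2 m j \<le> 1"
    and dev: "\<And>j. j \<le> m \<Longrightarrow> \<bar>Fw E1 m j (cc m i j) - Fw E2 m j (cc m i j)\<bar> \<le> sqrt (piw E2 m j * a) + b"
  shows "\<bar>SCFDL E1 m i - SCFDL E2 m i\<bar> \<le> 3 * (sqrt a + b) + real (m + 1) * b
           + 12 * (a * real m) * ln (real m) + 8 * ln (real m) * sqrt (a * real m * SCDL E2 m)"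
proof -
  define s where "s = SCDL E2 m"
  define A where "A = a * real m"
  define s' where "s' = s + A"
  define v where "v = sqrt (A / s')"
  have s0: "0 \<le> s" unfolding s_def by (rule SCDL_nonneg[OF g2])
  have A: "0 < A" unfolding A_def using a m by simp
  have s': "0 < s'" unfolding s'_def using s0 A by simp
  have v: "0 < v" unfolding v_def using A s' by simp
  have lnm: "0 \<le> ln (real m)" using m by simp
  have D: "\<bar>SCFDL E1 m i - SCFDL E2 m i\<bar> \<le> 3 * (sqrt a + b) + real (m + 1) * b
           + 4 * a * real m * (1 + 1 / v) * ln (real m) + 4 * v * ln (real m) * s"
    unfolding s_def by (rule det_v[OF g1 g2 m i a b v P1 dev])
  have e1: "A / v = sqrt (A * s')"
  proof -
    have "A = sqrt A * sqrt A" using A by simp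
    then show ?thesis unfolding v_def using A s'
      by (simp add: real_sqrt_divide real_sqrt_mult field_simps)
  qed
  have e2: "v * s' = sqrt (A * s')"
  proof -
    have "s' = sqrt s' * sqrt s'" using s' by simp
    then show ?thesis unfolding v_def using A s'
      by (simp add: real_sqrt_divide real_sqrt_mult field_simps)
  qed
  have e3: "sqrt (A * s') \<le> sqrt (A * s) + A"
  proof -
    have "sqrt (A * s') = sqrt (A * s + A * A)" unfolding s'_def by (simp add: algebra_simps)
    also have "\<dots> \<le> sqrt (A * s) + sqrt (A * A)" using A s0 by (intro sqrt_add_le_add_sqrt) auto
    also have "sqrt (A * A) = A" using A by simp
    finally show ?thesis .
  qed
  have t1: "4 * a * real m * (1 + 1 / v) * ln (real m) = 4 * A * ln (real m) + 4 * (A / v) * ln (real m)"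
    unfolding A_def by (simp add: algebra_simps)
  have t2: "4 * v * ln (real m) * s \<le> 4 * (v * s') * ln (real m)"
    using v lnm s0 A unfolding s'_def by (simp add: algebra_simps)
  have t3: "4 * (A / v) * ln (real m) \<le> 4 * (sqrt (A * s) + A) * ln (real m)"
    using e1 e3 lnm by (simp add: mult_right_mono)
  have t4: "4 * (v * s') * ln (real m) \<le> 4 * (sqrt (A * s) + A) * ln (real m)"
    using e2 e3 lnm by (simp add: mult_right_mono)
  have t5: "4 * A * ln (real m) + 4 * (sqrt (A * s) + A) * ln (real m) + 4 * (sqrt (A * s) + A) * ln (real m)
      = 12 * (a * real m) * ln (real m) + 8 * ln (real m) * sqrt (a * real m * SCDL E2 m)"
    unfolding A_def s_def by (simp add: algebra_simps)
  show ?thesis using D t1 t2 t3 t4 t5 by linarith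
qed



lemma exp_quad: fixes z :: real assumes "\<bar>z\<bar> \<le> 1" shows "exp z \<le> 1 + z + z\<^sup>2"
proof (cases "0 \<le> z")
  case True then show ?thesis using exp_bound[of z] assms by auto
next
  case False
  define y where "y = - z"
  have y: "0 < y" "y \<le> 1" using False assms unfolding y_def by auto
  have "1 \<le> (1 - y + y\<^sup>2) * (1 + y)"
    using y by (simp add: algebra_simps power2_eq_square power3_eq_cube)
  also have "\<dots> \<le> (1 - y + y\<^sup>2) * exp y"
  proof (rule mult_left_mono)
    show "1 + y \<le> exp y" by (rule exp_ge_add_one_self)
    have "y * y \<le> y * 1" using y by (intro mult_left_mono) auto
    then show "0 \<le> 1 - y + y\<^sup>2" using y by (simp add: power2_eq_square)
  qed
  finally have "1 / exp y \<le> 1 - y + y\<^sup>2" by (simp add: field_simps)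
  then show ?thesis unfolding y_def by (simp add: exp_minus field_simps)
qed

lemma (in prob_space) mgf_bound:
  fixes g :: "'a \<Rightarrow> real" and l :: real
  assumes g[measurable]: "g \<in> borel_measurable M" and gb: "\<And>x. \<bar>g x\<bar> \<le> 2"
    and l: "0 \<le> l" "l \<le> 1/4"
  shows "(\<integral>\<^sup>+x. ennreal (exp (l * (g x - expectation g))) \<partial>M) \<le> ennreal (exp (l\<^sup>2 * expectation (\<lambda>x. (g x)\<^sup>2)))"
proof -
  define mu where "mu = expectation g"
  have ig: "integrable M g" by (rule integrable_const_bound[where B=2]) (use gb in auto)
  have ig2': "\<bar>(g x)\<^sup>2\<bar> \<le> 4" for x
  proof -
    have "\<bar>g x\<bar> * \<bar>g x\<bar> \<le> 2 * 2" using gb[of x] by (intro mult_mono) auto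
    then show ?thesis by (simp add: power2_eq_square abs_mult)
  qed
  have ig2: "integrable M (\<lambda>x. (g x)\<^sup>2)"
    by (rule integrable_const_bound[where B=4]) (use ig2' in auto)
  have mub: "\<bar>mu\<bar> \<le> 2"
  proof -
    have gl: "-2 \<le> g x" and gu: "g x \<le> 2" for x using gb[of x] by linarith+
    have "expectation g \<le> expectation (\<lambda>x. 2)"
      using gu by (intro integral_mono ig) auto
    moreover have "expectation (\<lambda>x. -2) \<le> expectation g"
      using gl by (intro integral_mono ig) auto
    ultimately show ?thesis unfolding mu_def by (simp add: prob_space abs_le_iff)
  qed
  have lb: "\<bar>l * (g x - mu)\<bar> \<le> 1" for x
  proof -
    have "\<bar>g x - mu\<bar> \<le> 4" using gb[of x] mub by linarith
    then have "\<bar>l\<bar> * \<bar>g x - mu\<bar> \<le> 1/4 * 4" using l by (intro mult_mono) auto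
    then show ?thesis by (simp add: abs_mult)
  qed
  have pt: "exp (l * (g x - mu)) \<le> 1 + l * (g x - mu) + l\<^sup>2 * (g x - mu)\<^sup>2" for x
  proof -
    have "exp (l * (g x - mu)) \<le> 1 + l * (g x - mu) + (l * (g x - mu))\<^sup>2" by (intro exp_quad lb)
    then show ?thesis by (simp add: power_mult_distrib)
  qed
  have ie: "integrable M (\<lambda>x. exp (l * (g x - mu)))"
  proof (rule integrable_const_bound[where B="exp 1"])
    have "l * (g x - mu) \<le> 1" for x using lb[of x] by linarith
    then show "AE x in M. norm (exp (l * (g x - mu))) \<le> exp 1" by auto
  qed auto
  have eq: "(\<lambda>x. 1 + l * (g x - mu) + l\<^sup>2 * (g x - mu)\<^sup>2)
      = (\<lambda>x. (1 + l\<^sup>2 * mu\<^sup>2 - l * mu) + ((l - 2 * l\<^sup>2 * mu) * g x + l\<^sup>2 * (g x)\<^sup>2))"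
    by (rule ext) (simp add: power2_eq_square algebra_simps)
  have iq: "integrable M (\<lambda>x. 1 + l * (g x - mu) + l\<^sup>2 * (g x - mu)\<^sup>2)"
    unfolding eq using ig ig2 by auto
  have "expectation (\<lambda>x. 1 + l * (g x - mu) + l\<^sup>2 * (g x - mu)\<^sup>2)
      = (1 + l\<^sup>2 * mu\<^sup>2 - l * mu) + ((l - 2 * l\<^sup>2 * mu) * mu + l\<^sup>2 * expectation (\<lambda>x. (g x)\<^sup>2))"
    unfolding eq using ig ig2 by (simp add: mu_def prob_space)
  also have "\<dots> = 1 + l\<^sup>2 * (expectation (\<lambda>x. (g x)\<^sup>2) - mu\<^sup>2)"
    by (simp add: power2_eq_square algebra_simps)
  also have "\<dots> \<le> 1 + l\<^sup>2 * expectation (\<lambda>x. (g x)\<^sup>2)"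
    by (simp add: mult_left_mono)
  also have "\<dots> \<le> exp (l\<^sup>2 * expectation (\<lambda>x. (g x)\<^sup>2))" by (rule exp_ge_add_one_self)
  finally have I: "expectation (\<lambda>x. 1 + l * (g x - mu) + l\<^sup>2 * (g x - mu)\<^sup>2) \<le> exp (l\<^sup>2 * expectation (\<lambda>x. (g x)\<^sup>2))" .
  have "expectation (\<lambda>x. exp (l * (g x - mu))) \<le> expectation (\<lambda>x. 1 + l * (g x - mu) + l\<^sup>2 * (g x - mu)\<^sup>2)"
    by (intro integral_mono ie iq pt)
  with I have J: "expectation (\<lambda>x. exp (l * (g x - mu))) \<le> exp (l\<^sup>2 * expectation (\<lambda>x. (g x)\<^sup>2))" by linarith
  have "(\<integral>\<^sup>+x. ennreal (exp (l * (g x - mu))) \<partial>M) = ennreal (expectation (\<lambda>x. exp (l * (g x - mu))))"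
    by (rule nn_integral_eq_integral[OF ie]) auto
  also have "\<dots> \<le> ennreal (exp (l\<^sup>2 * expectation (\<lambda>x. (g x)\<^sup>2)))" using J by (rule ennreal_leI)
  finally show ?thesis unfolding mu_def .
qed


lemma chernoff_prod:
  fixes D :: "'a measure" and g :: "'a \<Rightarrow> real" and T :: nat
  assumes D: "prob_space D" and g[measurable]: "g \<in> borel_measurable D" and gb: "\<And>x. \<bar>g x\<bar> \<le> 2"
    and l: "0 < l" "l \<le> 1/4"
  shows "emeasure (PiM {..<T} (\<lambda>_. D)) {xs \<in> space (PiM {..<T} (\<lambda>_. D)). c \<le> (\<Sum>t<T. g (xs t) - integral\<^sup>L D g)}
         \<le> ennreal (exp (- l * c) * exp (l\<^sup>2 * integral\<^sup>L D (\<lambda>x. (g x)\<^sup>2)) ^ T)"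
proof -
  interpret P: product_prob_space "\<lambda>_::nat. D" "{..<T}"
    by (simp add: product_prob_space_def product_prob_space_axioms_def product_sigma_finite_def D
        prob_space_imp_sigma_finite)
  interpret D: prob_space D by (rule D)
  let ?M = "PiM {..<T} (\<lambda>_. D)"
  define mu where "mu = integral\<^sup>L D g"
  define V where "V = integral\<^sup>L D (\<lambda>x. (g x)\<^sup>2)"
  have [measurable]: "(\<lambda>xs. \<Sum>t<T. g (xs t) - mu) \<in> borel_measurable ?M"
    by measurable
  have "emeasure ?M {xs \<in> space ?M. c \<le> (\<Sum>t<T. g (xs t) - mu)}
      \<le> ennreal (exp (- l * c)) * (\<integral>\<^sup>+xs. ennreal (exp (l * (\<Sum>t<T. g (xs t) - mu))) * indicator (space ?M) xs \<partial>?M)"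
    by (intro Chernoff_ineq_nn_integral_ge l) auto
  also have "(\<integral>\<^sup>+xs. ennreal (exp (l * (\<Sum>t<T. g (xs t) - mu))) * indicator (space ?M) xs \<partial>?M)
      = (\<integral>\<^sup>+xs. (\<Prod>t\<in>{..<T}. ennreal (exp (l * (g (xs t) - mu)))) \<partial>?M)"
    by (intro nn_integral_cong) (simp add: sum_distrib_left exp_sum prod_ennreal)
  also have "\<dots> = (\<Prod>t\<in>{..<T}. \<integral>\<^sup>+y. ennreal (exp (l * (g y - mu))) \<partial>D)"
    by (rule P.product_nn_integral_prod) auto
  also have "\<dots> \<le> (\<Prod>t\<in>{..<T}. ennreal (exp (l\<^sup>2 * V)))"
    unfolding mu_def V_def
    by (intro prod_mono_ennreal prob_space.mgf_bound[OF D g gb]) (use l in auto)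
  also have "\<dots> = ennreal (exp (l\<^sup>2 * V) ^ T)" by (simp add: ennreal_power)
  finally have "emeasure ?M {xs \<in> space ?M. c \<le> (\<Sum>t<T. g (xs t) - mu)}
      \<le> ennreal (exp (- l * c)) * ennreal (exp (l\<^sup>2 * V) ^ T)"
    by (simp add: mult_left_mono)
  then show ?thesis unfolding mu_def V_def by (simp add: ennreal_mult)
qed


lemma tail_exponent:
  fixes V L e :: real and T :: nat
  assumes T: "1 \<le> T" and L: "0 < L" and V: "0 \<le> V" and e: "2 * sqrt (V * L / T) + 8 * L / T \<le> e"
  shows "\<exists>l. 0 < l \<and> l \<le> 1/4 \<and> real T * l\<^sup>2 * V - l * (real T * e) \<le> - L"
proof -
  have Tp: "0 < real T" using T by simp
  have e8: "8 * L / T \<le> e" using e by (smt (verit) real_sqrt_ge_zero divide_nonneg_nonneg mult_nonneg_nonneg V L Tp)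
  then have Te: "8 * L \<le> real T * e" using Tp by (simp add: field_simps)
  have ep: "0 < e" using e8 L Tp by (smt (verit) divide_pos_pos)
  show ?thesis
  proof (cases "e \<le> V / 2")
    case True
    have Vp: "0 < V" using True ep by linarith
    define l where "l = e / (2 * V)"
    have l: "0 < l" "l \<le> 1/4" unfolding l_def using True Vp ep by (auto simp: field_simps)
    have s: "2 * sqrt (V * L / T) \<le> e" using e L Tp by (smt (verit) divide_pos_pos)
    have "(2 * sqrt (V * L / T))\<^sup>2 \<le> e\<^sup>2"
      using s by (intro power_mono) (use V L Tp in auto)
    then have "4 * (V * L / T) \<le> e\<^sup>2" using V L Tp by (simp add: power_mult_distrib)
    then have q: "4 * V * L \<le> real T * e\<^sup>2" using Tp by (simp add: field_simps)
    have "real T * l\<^sup>2 * V - l * (real T * e) = - (real T * e\<^sup>2) / (4 * V)"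
      unfolding l_def using Vp by (simp add: field_simps power2_eq_square)
    also have "\<dots> \<le> - L" using q Vp by (simp add: field_simps)
    finally show ?thesis using l by blast
  next
    case False
    have "V \<le> 2 * e" using False by linarith
    then have TV: "real T * V \<le> real T * (2 * e)" using Tp by (intro mult_left_mono) auto
    have eq: "real T * (1/4)\<^sup>2 * V - 1/4 * (real T * e) = (real T * V) / 16 - (real T * e) / 4"
      by (simp add: power2_eq_square)
    have "real T * (1/4)\<^sup>2 * V - 1/4 * (real T * e) \<le> - L" unfolding eq using TV Te by linarith
    then show ?thesis by (intro exI[of _ "1/4"]) auto
  qed
qed

lemma tail:
  fixes D :: "'a measure" and g :: "'a \<Rightarrow> real" and T :: nat
  assumes D: "prob_space D" and g[measurable]: "g \<in> borel_measurable D" and gb: "\<And>x. \<bar>g x\<bar> \<le> 2"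
    and T: "1 \<le> T" and L: "0 < L"
    and e: "2 * sqrt (integral\<^sup>L D (\<lambda>x. (g x)\<^sup>2) * L / T) + 8 * L / T \<le> e"
  shows "measure (PiM {..<T} (\<lambda>_. D)) {xs \<in> space (PiM {..<T} (\<lambda>_. D)). e \<le> (\<Sum>t<T. g (xs t)) / T - integral\<^sup>L D g}
         \<le> exp (- L)"
proof -
  interpret P: product_prob_space "\<lambda>_::nat. D" "{..<T}"
    by (simp add: product_prob_space_def product_prob_space_axioms_def product_sigma_finite_def D
        prob_space_imp_sigma_finite)
  let ?M = "PiM {..<T} (\<lambda>_. D)"
  define V where "V = integral\<^sup>L D (\<lambda>x. (g x)\<^sup>2)"
  have V: "0 \<le> V" unfolding V_def by (intro integral_nonneg_AE) auto
  obtain l where l: "0 < l" "l \<le> 1/4" "real T * l\<^sup>2 * V - l * (real T * e) \<le> - L"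
    using tail_exponent[OF T L V e[folded V_def]] by blast
  have Tp: "0 < real T" using T by simp
  have set: "{xs \<in> space ?M. e \<le> (\<Sum>t<T. g (xs t)) / T - integral\<^sup>L D g}
      = {xs \<in> space ?M. real T * e \<le> (\<Sum>t<T. g (xs t) - integral\<^sup>L D g)}"
    using Tp by (auto simp: sum_subtractf field_simps)
  have A: "emeasure ?M {xs \<in> space ?M. real T * e \<le> (\<Sum>t<T. g (xs t) - integral\<^sup>L D g)}
      \<le> ennreal (exp (- l * (real T * e)) * exp (l\<^sup>2 * V) ^ T)"
    unfolding V_def by (rule chernoff_prod[OF D g gb l(1,2)])
  have B: "exp (- l * (real T * e)) * exp (l\<^sup>2 * V) ^ T = exp (real T * l\<^sup>2 * V - l * (real T * e))"
    by (simp add: exp_of_nat_mult[symmetric] exp_add[symmetric] mult_ac)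
  have C: "exp (real T * l\<^sup>2 * V - l * (real T * e)) \<le> exp (- L)" using l(3) by simp
  have "emeasure ?M {xs \<in> space ?M. real T * e \<le> (\<Sum>t<T. g (xs t) - integral\<^sup>L D g)} \<le> ennreal (exp (- L))"
  proof -
    have "ennreal (exp (- l * (real T * e)) * exp (l\<^sup>2 * V) ^ T) \<le> ennreal (exp (- L))"
      using B C by (intro ennreal_leI) simp
    with A show ?thesis by (rule order.trans)
  qed
  then show ?thesis unfolding set by (simp add: P.emeasure_eq_measure)
qed



lemma wt_nonneg: "0 \<le> wt m j p" unfolding wt_def by simp
lemma wt_le1: "wt m j p \<le> 1" unfolding wt_def by simp

lemma meas_wt_prod:
  fixes f :: "real \<Rightarrow> bool \<Rightarrow> real"
  shows "(\<lambda>(p, y). wt m j p * (of_bool y - c)) \<in> borel_measurable (borel \<Otimes>\<^sub>M count_space (UNIV :: bool set))"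
    and "(\<lambda>(p, y). wt m j p * of_bool y) \<in> borel_measurable (borel \<Otimes>\<^sub>M count_space (UNIV :: bool set))"
    and "(\<lambda>(p, y). wt m j p) \<in> borel_measurable (borel \<Otimes>\<^sub>M count_space (UNIV :: bool set))"
  unfolding wt_def by measurable

lemma goodE_expS: assumes "1 \<le> T" shows "goodE (expS T xs) m"
proof -
  have "Fw (expS T xs) m j c = Nw (expS T xs) m j - c * piw (expS T xs) m j" for j c
    unfolding Fw_def Nw_def piw_def expS_def
    by (simp add: split_beta sum_subtractf sum_distrib_left algebra_simps diff_divide_distrib)
  moreover have "0 \<le> Nw (expS T xs) m j" for j
    unfolding Nw_def expS_def by (auto simp: split_beta wt_nonneg intro!: sum_nonneg divide_nonneg_nonneg)
  moreover have "Nw (expS T xs) m j \<le> piw (expS T xs) m j" for j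
    unfolding Nw_def piw_def expS_def
    by (intro divide_right_mono sum_mono) (auto simp: split_beta wt_nonneg)
  ultimately show ?thesis unfolding goodE_def by auto
qed

lemma
  assumes D: "prob_space D" and S: "sets D = sets (borel \<Otimes>\<^sub>M count_space (UNIV :: bool set))"
  shows goodE_expD: "goodE (expD D) m" and piw_expD_le1: "piw (expD D) m j \<le> 1"
    and meas_D: "(\<lambda>(p, y). wt m j p * (of_bool y - c)) \<in> borel_measurable D"
proof -
  interpret prob_space D by (rule D)
  have ms: "\<And>f. f \<in> borel_measurable (borel \<Otimes>\<^sub>M count_space (UNIV :: bool set)) \<Longrightarrow> f \<in> borel_measurable D"
    using measurable_cong_sets[OF S refl] by blast
  have m1: "(\<lambda>(p, y). wt m j p * (of_bool y - c)) \<in> borel_measurable D" for j c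
    using ms meas_wt_prod by blast
  have m2: "(\<lambda>(p, y). wt m j p * of_bool y) \<in> borel_measurable D" for j
    using ms meas_wt_prod by blast
  have m3: "(\<lambda>(p, y). wt m j p) \<in> borel_measurable D" for j
    using ms meas_wt_prod by blast
  have i2: "integrable D (\<lambda>(p, y). wt m j p * of_bool y)" for j
    by (rule integrable_const_bound[where B=1]) (use m2 in \<open>auto simp: split_beta wt_nonneg wt_le1\<close>)
  have i3: "integrable D (\<lambda>(p, y). wt m j p)" for j
    by (rule integrable_const_bound[where B=1]) (use m3 in \<open>auto simp: split_beta wt_nonneg wt_le1\<close>)
  show "(\<lambda>(p, y). wt m j p * (of_bool y - c)) \<in> borel_measurable D" by (rule m1)
  have "Fw (expD D) m j c = Nw (expD D) m j - c * piw (expD D) m j" for j c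
  proof -
    have "(\<lambda>(p, y). wt m j p * (of_bool y - c)) = (\<lambda>x. (\<lambda>(p, y). wt m j p * of_bool y) x - c * (\<lambda>(p, y). wt m j p) x)"
      by (auto simp: split_beta algebra_simps)
    then show ?thesis unfolding Fw_def Nw_def piw_def expD_def using i2 i3 by simp
  qed
  moreover have "0 \<le> Nw (expD D) m j" for j
    unfolding Nw_def expD_def by (intro integral_nonneg_AE) (auto simp: split_beta wt_nonneg)
  moreover have "Nw (expD D) m j \<le> piw (expD D) m j" for j
    unfolding Nw_def piw_def expD_def
    by (intro integral_mono i2 i3) (auto simp: split_beta wt_nonneg)
  ultimately show "goodE (expD D) m" unfolding goodE_def by auto
  have "piw (expD D) m j \<le> expectation (\<lambda>_. 1)"
    unfolding piw_def expD_def by (intro integral_mono i3) (auto simp: split_beta wt_le1)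
  then show "piw (expD D) m j \<le> 1" by (simp add: prob_space)
qed


lemma meas_SCFDL_S:
  assumes D: "prob_space D" and S: "sets D = sets (borel \<Otimes>\<^sub>M count_space (UNIV :: bool set))"
    and T: "1 \<le> T" and i: "i \<le> m"
  shows "(\<lambda>xs. SCFDL (expS T xs) m i) \<in> borel_measurable (PiM {..<T} (\<lambda>_. D))"
proof -
  have mg[measurable]: "(\<lambda>(p, y). wt m j p * (of_bool y - c)) \<in> borel_measurable D" for j c
    by (rule meas_D[OF D S])
  have eq: "(\<lambda>xs. SCFDL (expS T xs) m i) = (\<lambda>xs. \<Sum>j\<in>{0..m}. max ((if j \<le> i then 1 else -1) *
      ((\<Sum>t<T. (\<lambda>(p, y). wt m j p * (of_bool y - cc m i j)) (xs t)) / real T)) 0)"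
    by (rule ext, subst SCFDL_sum[OF goodE_expS[OF T] i]) (auto simp: Fw_def expS_def intro!: sum.cong)
  show ?thesis unfolding eq by measurable
qed


lemma ln2_ge_half: "1/2 \<le> ln (2::real)"
proof -
  have "ln (1/2::real) \<le> 1/2 - 1" by (intro ln_le_minus_one) auto
  then show ?thesis by (simp add: ln_div)
qed

lemma numeric:
  fixes m T :: nat and \<delta> s :: real
  assumes m: "2 \<le> m" and T: "1 \<le> T" and d0: "0 < \<delta>" and d1: "\<delta> < 1 / (2 * real m)" and s: "0 \<le> s"
  defines "L \<equiv> ln (2 * real (m + 1) / \<delta>)"
  shows "3 * (sqrt (16 * L / T) + 8 * L / T) + real (m + 1) * (8 * L / T)
           + 12 * (16 * L / T * real m) * ln (real m) + 8 * ln (real m) * sqrt (16 * L / T * real m * s)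
         \<le> 1000 * (sqrt (ln (1 / \<delta>) / real T)
                   + ln (real m) * sqrt (real m * s * ln (1 / \<delta>) / real T)
                   + real m * ln (real m) * ln (1 / \<delta>) / real T)"
proof -
  define \<Lambda> where "\<Lambda> = ln (1 / \<delta>)"
  define u where "u = \<Lambda> / real T"
  have Tp: "0 < real T" using T by simp
  have mp: "2 \<le> real m" using m by simp
  have dm: "2 * real m * \<delta> < 1" using d1 mp d0 by (simp add: field_simps)
  have "2 * 2 * \<delta> \<le> 2 * real m * \<delta>" using mp d0 by (intro mult_right_mono) auto
  then have d2: "\<delta> < 1/2" using dm by linarith
  have lnm: "1/2 \<le> ln (real m)"
  proof -
    have "ln 2 \<le> ln (real m)" using mp by simp
    then show ?thesis using ln2_ge_half by linarith
  qed
  have \<Lambda>2: "ln 2 \<le> \<Lambda>" unfolding \<Lambda>_def using d0 d2 by (simp add: field_simps)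
  have \<Lambda>0: "0 \<le> \<Lambda>" using \<Lambda>2 ln2_ge_half by linarith
  have u0: "0 \<le> u" unfolding u_def using \<Lambda>0 Tp by simp
  have L3: "L \<le> 3 * \<Lambda>"
  proof -
    have "2 * real (m + 1) \<le> 4 * real m" using mp by simp
    also have "\<dots> < 2 / \<delta>" using dm d0 by (simp add: field_simps)
    finally have "2 * real (m + 1) \<le> 2 / \<delta>" by simp
    then have "2 * real (m + 1) / \<delta> \<le> 2 / \<delta> / \<delta>" using d0 by (intro divide_right_mono) auto
    then have "L \<le> ln (2 / \<delta> / \<delta>)" unfolding L_def using d0 by (subst ln_le_cancel_iff) auto
    also have "ln (2 / \<delta> / \<delta>) = ln 2 + 2 * \<Lambda>" unfolding \<Lambda>_def using d0
      by (simp add: ln_div ln_mult)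
    finally show ?thesis using \<Lambda>2 by linarith
  qed
  have "1 \<le> 2 * real (m + 1) / \<delta>" using d0 d2 by (simp add: field_simps)
  then have L0: "0 \<le> L" unfolding L_def by simp
  have Lu: "L / real T \<le> 3 * u" unfolding u_def using L3 Tp by (simp add: divide_right_mono)
  have a: "16 * L / real T \<le> 48 * u" using Lu by simp
  have b: "8 * L / real T \<le> 24 * u" using Lu by simp
  have b0: "0 \<le> 8 * L / real T" using L0 Tp by simp
  have sa: "sqrt (16 * L / T) \<le> 7 * sqrt u"
  proof -
    have "sqrt (16 * L / T) \<le> sqrt (49 * u)" using a u0 by (intro real_sqrt_le_mono) simp
    also have "sqrt (49 * u) = 7 * sqrt u" by (simp add: real_sqrt_mult)
    finally show ?thesis .
  qed
  have sb: "sqrt (16 * L / T * real m * s) \<le> 7 * sqrt (real m * s * u)"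
  proof -
    have "16 * L / T * real m * s \<le> 49 * u * real m * s"
      using a u0 mp s by (intro mult_right_mono) auto
    then have "sqrt (16 * L / T * real m * s) \<le> sqrt (49 * (real m * s * u))"
      by (intro real_sqrt_le_mono) (simp add: mult_ac)
    also have "\<dots> = 7 * sqrt (real m * s * u)" by (simp add: real_sqrt_mult)
    finally show ?thesis .
  qed
  have t1: "(real (m + 1) + 3) * (8 * L / T) \<le> (3 * real m) * (24 * u)"
    using b b0 mp u0 by (intro mult_mono) auto
  have t1': "(3 * real m) * (24 * u) \<le> 144 * (real m * ln (real m) * u)"
  proof -
    have "real m * u * 1 \<le> real m * u * (2 * ln (real m))" using lnm mp u0 by (intro mult_left_mono) auto
    then show ?thesis by (simp add: algebra_simps)
  qed
  have t2: "12 * (16 * L / T * real m) * ln (real m) \<le> 12 * (48 * u * real m) * ln (real m)"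
    using a mp lnm by (intro mult_right_mono mult_left_mono) auto
  have t3: "8 * ln (real m) * sqrt (16 * L / T * real m * s) \<le> 8 * ln (real m) * (7 * sqrt (real m * s * u))"
    using sb lnm by (intro mult_left_mono) auto
  have e1: "sqrt (ln (1 / \<delta>) / real T) = sqrt u" unfolding u_def \<Lambda>_def ..
  have e2: "sqrt (real m * s * ln (1 / \<delta>) / real T) = sqrt (real m * s * u)" unfolding u_def \<Lambda>_def by simp
  have e3: "real m * ln (real m) * ln (1 / \<delta>) / real T = real m * ln (real m) * u" unfolding u_def \<Lambda>_def by simp
  have pos1: "0 \<le> ln (real m) * sqrt (real m * s * u)" using lnm s u0 mp by (intro mult_nonneg_nonneg) auto
  have pos2: "0 \<le> sqrt u" using u0 by simp
  have pos3: "0 \<le> real m * ln (real m) * u" using lnm u0 by simp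
  have e4: "real (m + 1) * (8 * L / T) + 3 * (8 * L / T) = (real (m + 1) + 3) * (8 * L / T)" by (simp add: algebra_simps add_divide_distrib)
  have e5: "12 * (48 * u * real m) * ln (real m) = 576 * (real m * ln (real m) * u)" by simp
  have e6: "8 * ln (real m) * (7 * sqrt (real m * s * u)) = 56 * (ln (real m) * sqrt (real m * s * u))" by simp
  have h2: "3 * (8 * L / T) + real (m + 1) * (8 * L / T) \<le> 144 * (real m * ln (real m) * u)"
    using e4 t1 t1' by linarith
  have h3: "12 * (16 * L / T * real m) * ln (real m) \<le> 576 * (real m * ln (real m) * u)"
    using t2 e5 by linarith
  have h4: "8 * ln (real m) * sqrt (16 * L / T * real m * s) \<le> 56 * (ln (real m) * sqrt (real m * s * u))"
    using t3 e6 by linarith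
  have key: "\<And>A b m1 C Dd X Y Z :: real. A \<le> 7 * X \<Longrightarrow> 3 * b + m1 * b \<le> 144 * Z \<Longrightarrow> C \<le> 576 * Z
      \<Longrightarrow> Dd \<le> 56 * Y \<Longrightarrow> 0 \<le> Y \<Longrightarrow> 0 \<le> X \<Longrightarrow> 0 \<le> Z
      \<Longrightarrow> 3 * (A + b) + m1 * b + C + Dd \<le> 1000 * (X + Y + Z)"
    by argo
  show ?thesis unfolding e1 e2 e3 by (rule key[OF sa h2 h3 h4 pos1 pos2 pos3])
qed


lemma g_sq_bound:
  fixes c :: real assumes c: "0 \<le> c" "c \<le> 2"
  shows "((\<lambda>(p, y). wt m j p * (of_bool y - c)) x)\<^sup>2 \<le> 4 * (\<lambda>(p, y). wt m j p) x"
    and "\<bar>(\<lambda>(p, y). wt m j p * (of_bool y - c)) x\<bar> \<le> 2"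
proof -
  obtain p y where x: "x = (p, y)" by (cases x)
  have w: "0 \<le> wt m j p" "wt m j p \<le> 1" by (rule wt_nonneg, rule wt_le1)
  have yc: "\<bar>of_bool y - c\<bar> \<le> 2" using c by (cases y) auto
  have "(wt m j p * (of_bool y - c))\<^sup>2 = (wt m j p)\<^sup>2 * (of_bool y - c)\<^sup>2" by (simp add: power_mult_distrib)
  also have "\<dots> \<le> wt m j p * 4"
  proof (rule mult_mono)
    show "(wt m j p)\<^sup>2 \<le> wt m j p" using w by (simp add: power2_eq_square mult_left_le)
    have "\<bar>of_bool y - c\<bar> * \<bar>of_bool y - c\<bar> \<le> 2 * 2" using yc by (intro mult_mono) auto
    then show "(of_bool y - c)\<^sup>2 \<le> 4" by (simp add: power2_eq_square abs_mult[symmetric])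
  qed (use w in auto)
  finally show "((\<lambda>(p, y). wt m j p * (of_bool y - c)) x)\<^sup>2 \<le> 4 * (\<lambda>(p, y). wt m j p) x"
    unfolding x by simp
  have "\<bar>wt m j p * (of_bool y - c)\<bar> \<le> 1 * 2" unfolding abs_mult using w yc by (intro mult_mono) auto
  then show "\<bar>(\<lambda>(p, y). wt m j p * (of_bool y - c)) x\<bar> \<le> 2" unfolding x by simp
qed

lemma cc_bounds: assumes "1 \<le> m" "i \<le> m" shows "0 \<le> cc m i j" "cc m i j \<le> 2"
proof -
  show "0 \<le> cc m i j" unfolding cc_def by simp
  have "real (i + 1) \<le> 2 * real m" "real i \<le> 2 * real m" using assms by auto
  then show "cc m i j \<le> 2" unfolding cc_def using assms by (auto simp: field_simps)
qed


lemma bad_j: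
  fixes D :: "(real \<times> bool) measure" and T m i j :: nat and L :: real
  assumes D: "prob_space D" and S: "sets D = sets (borel \<Otimes>\<^sub>M count_space (UNIV :: bool set))"
    and T: "1 \<le> T" and m: "1 \<le> m" and i: "i \<le> m" and L: "0 < L"
  defines "g \<equiv> (\<lambda>(p, y). wt m j p * (of_bool y - cc m i j))"
  defines "eps \<equiv> sqrt (piw (expD D) m j * (16 * L / T)) + 8 * L / T"
  defines "bad \<equiv> {xs \<in> space (PiM {..<T} (\<lambda>_. D)). eps \<le> (\<Sum>t<T. g (xs t)) / T - integral\<^sup>L D g}
               \<union> {xs \<in> space (PiM {..<T} (\<lambda>_. D)). eps \<le> (\<Sum>t<T. (\<lambda>x. - g x) (xs t)) / T - integral\<^sup>L D (\<lambda>x. - g x)}"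
  shows "bad \<in> sets (PiM {..<T} (\<lambda>_. D))" and "measure (PiM {..<T} (\<lambda>_. D)) bad \<le> 2 * exp (- L)"
proof -
  interpret D: prob_space D by (rule D)
  have gm[measurable]: "g \<in> borel_measurable D" unfolding g_def by (rule meas_D[OF D S])
  have gm2: "(\<lambda>x. - g x) \<in> borel_measurable D" by measurable
  have c: "0 \<le> cc m i j" "cc m i j \<le> 2" using cc_bounds[OF m i] by auto
  have gb: "\<bar>g x\<bar> \<le> 2" for x unfolding g_def by (rule g_sq_bound(2)[OF c])
  have gb2: "\<bar>- g x\<bar> \<le> 2" for x using gb[of x] by simp
  show "bad \<in> sets (PiM {..<T} (\<lambda>_. D))" unfolding bad_def by measurable
  have Tp: "0 < real T" using T by simp
  have m3: "(\<lambda>(p, y). wt m j p) \<in> borel_measurable D"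
    using measurable_cong_sets[OF S refl] meas_wt_prod(3) by blast
  have i3: "integrable D (\<lambda>(p, y). wt m j p)"
    by (rule D.integrable_const_bound[where B=1]) (use m3 in \<open>auto simp: split_beta wt_nonneg wt_le1\<close>)
  have i4: "integrable D (\<lambda>x. (g x)\<^sup>2)"
    by (rule D.integrable_const_bound[where B=4])
       (use gb in \<open>auto simp: abs_square_le_1 power2_le_iff_abs_le[symmetric]\<close>)
  have V: "integral\<^sup>L D (\<lambda>x. (g x)\<^sup>2) \<le> 4 * piw (expD D) m j"
  proof -
    have "integral\<^sup>L D (\<lambda>x. (g x)\<^sup>2) \<le> integral\<^sup>L D (\<lambda>x. 4 * (\<lambda>(p, y). wt m j p) x)"
      by (intro integral_mono i4) (use i3 g_sq_bound(1)[OF c] in \<open>auto simp: g_def\<close>)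
    then show ?thesis unfolding piw_def expD_def by simp
  qed
  have V0: "0 \<le> integral\<^sup>L D (\<lambda>x. (g x)\<^sup>2)" by (intro integral_nonneg_AE) auto
  have e: "2 * sqrt (integral\<^sup>L D (\<lambda>x. (g x)\<^sup>2) * L / T) + 8 * L / T \<le> eps"
  proof -
    have "2 * sqrt (integral\<^sup>L D (\<lambda>x. (g x)\<^sup>2) * L / T) = sqrt (4 * (integral\<^sup>L D (\<lambda>x. (g x)\<^sup>2) * L / T))"
      by (subst real_sqrt_mult) simp
    also have "\<dots> \<le> sqrt (piw (expD D) m j * (16 * L / T))"
    proof (rule real_sqrt_le_mono)
      have "integral\<^sup>L D (\<lambda>x. (g x)\<^sup>2) * (L / T) \<le> 4 * piw (expD D) m j * (L / T)"
        using V L Tp by (intro mult_right_mono) auto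
      moreover have "4 * (integral\<^sup>L D (\<lambda>x. (g x)\<^sup>2) * L / T) = 4 * (integral\<^sup>L D (\<lambda>x. (g x)\<^sup>2) * (L / T))"
        by simp
      moreover have "piw (expD D) m j * (16 * L / T) = 4 * (4 * piw (expD D) m j * (L / T))" by simp
      ultimately show "4 * (integral\<^sup>L D (\<lambda>x. (g x)\<^sup>2) * L / T) \<le> piw (expD D) m j * (16 * L / T)"
        by argo
    qed
    finally show ?thesis unfolding eps_def by simp
  qed
  have e2: "2 * sqrt (integral\<^sup>L D (\<lambda>x. (- g x)\<^sup>2) * L / T) + 8 * L / T \<le> eps" using e by simp
  have A: "measure (PiM {..<T} (\<lambda>_. D)) {xs \<in> space (PiM {..<T} (\<lambda>_. D)). eps \<le> (\<Sum>t<T. g (xs t)) / T - integral\<^sup>L D g} \<le> exp (- L)"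
    by (rule tail[OF D gm gb T L e])
  have B: "measure (PiM {..<T} (\<lambda>_. D)) {xs \<in> space (PiM {..<T} (\<lambda>_. D)). eps \<le> (\<Sum>t<T. (\<lambda>x. - g x) (xs t)) / T - integral\<^sup>L D (\<lambda>x. - g x)} \<le> exp (- L)"
    by (rule tail[OF D gm2 gb2 T L e2])
  have "measure (PiM {..<T} (\<lambda>_. D)) bad \<le> measure (PiM {..<T} (\<lambda>_. D)) {xs \<in> space (PiM {..<T} (\<lambda>_. D)). eps \<le> (\<Sum>t<T. g (xs t)) / T - integral\<^sup>L D g}
     + measure (PiM {..<T} (\<lambda>_. D)) {xs \<in> space (PiM {..<T} (\<lambda>_. D)). eps \<le> (\<Sum>t<T. (\<lambda>x. - g x) (xs t)) / T - integral\<^sup>L D (\<lambda>x. - g x)}"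
    unfolding bad_def by (rule measure_Un_le) measurable
  then show "measure (PiM {..<T} (\<lambda>_. D)) bad \<le> 2 * exp (- L)" using A B by linarith
qed


theorem lemma7p2:
  "\<exists>C>0. \<forall>(D :: (real \<times> bool) measure) (T :: nat) (m :: nat) (i :: nat) (\<delta> :: real).
     prob_space D \<longrightarrow>
     sets D = sets (borel \<Otimes>\<^sub>M count_space (UNIV :: bool set)) \<longrightarrow>
     (AE x in D. fst x \<in> {0..1}) \<longrightarrow>
     T \<ge> 1 \<longrightarrow> m \<ge> 1 \<longrightarrow> i \<le> m \<longrightarrow> 0 < \<delta> \<longrightarrow> \<delta> < 1 / (2 * real m) \<longrightarrow>
     measure (PiM {..<T} (\<lambda>_. D))
       {xs \<in> space (PiM {..<T} (\<lambda>_. D)).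
          \<bar>SCFDL (expS T xs) m i - SCFDL (expD D) m i\<bar>
            \<le> C * (sqrt (ln (1 / \<delta>) / real T)
                   + ln (real m) * sqrt (real m * SCDL (expD D) m * ln (1 / \<delta>) / real T)
                   + real m * ln (real m) * ln (1 / \<delta>) / real T)}
       \<ge> 1 - \<delta>"
proof (intro exI[of _ "1000::real"] conjI allI impI)
  show "(0::real) < 1000" by simp
  fix D :: "(real \<times> bool) measure" and T m i :: nat and \<delta> :: real
  assume D: "prob_space D" and S: "sets D = sets (borel \<Otimes>\<^sub>M count_space (UNIV :: bool set))"
    and AE: "AE x in D. fst x \<in> {0..1}" and T: "T \<ge> 1" and m: "m \<ge> 1" and i: "i \<le> m"
    and d0: "0 < \<delta>" and d1: "\<delta> < 1 / (2 * real m)"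
  interpret P: product_prob_space "\<lambda>_::nat. D" "{..<T}"
    by (simp add: product_prob_space_def product_prob_space_axioms_def product_sigma_finite_def D
        prob_space_imp_sigma_finite)
  have fm[measurable]: "(\<lambda>xs. SCFDL (expS T xs) m i) \<in> borel_measurable (PiM {..<T} (\<lambda>_. D))"
    by (rule meas_SCFDL_S[OF D S T i])
  define R where "R = 1000 * (sqrt (ln (1 / \<delta>) / real T)
                   + ln (real m) * sqrt (real m * SCDL (expD D) m * ln (1 / \<delta>) / real T)
                   + real m * ln (real m) * ln (1 / \<delta>) / real T)"
  have Ameas: "{xs \<in> space (PiM {..<T} (\<lambda>_. D)). \<bar>SCFDL (expS T xs) m i - SCFDL (expD D) m i\<bar> \<le> R}
      \<in> sets (PiM {..<T} (\<lambda>_. D))" by measurable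
  have gS: "goodE (expS T xs) m" for xs by (rule goodE_expS[OF T])
  have gD: "goodE (expD D) m" by (rule goodE_expD[OF D S])
  have "1 - \<delta> \<le> measure (PiM {..<T} (\<lambda>_. D))
      {xs \<in> space (PiM {..<T} (\<lambda>_. D)). \<bar>SCFDL (expS T xs) m i - SCFDL (expD D) m i\<bar> \<le> R}"
  proof (cases "m = 1")
    case True
    have "\<delta> < 1" using d1 True by simp
    then have "0 \<le> ln (1 / \<delta>)" using d0 by simp
    then have R0: "0 \<le> R" unfolding R_def True by simp
    have "{xs \<in> space (PiM {..<T} (\<lambda>_. D)). \<bar>SCFDL (expS T xs) m i - SCFDL (expD D) m i\<bar> \<le> R}
        = space (PiM {..<T} (\<lambda>_. D))"
      using SCFDL_m1[OF gS[unfolded True]] SCFDL_m1[OF gD[unfolded True]] i R0 unfolding True by auto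
    then show ?thesis using d0 by (simp add: P.P.prob_space)
  next
    case False
    then have m2: "2 \<le> m" using m by simp
    define L where "L = ln (2 * real (m + 1) / \<delta>)"
    have L: "0 < L"
    proof -
      have "2 * 2 * \<delta> \<le> 2 * real m * \<delta>" using m2 d0 by (intro mult_right_mono) auto
      moreover have "2 * real m * \<delta> < 1" using d1 d0 m by (simp add: field_simps)
      ultimately have "\<delta> < 1" by linarith
      then have "1 < 2 * real (m + 1) / \<delta>" using d0 by (simp add: field_simps)
      then show ?thesis unfolding L_def by simp
    qed
    define g where "g j = (\<lambda>(p, y). wt m j p * (of_bool y - cc m i j))" for j
    define eps where "eps j = sqrt (piw (expD D) m j * (16 * L / T)) + 8 * L / T" for j
    define bad where "bad j = {xs \<in> space (PiM {..<T} (\<lambda>_. D)). eps j \<le> (\<Sum>t<T. g j (xs t)) / T - integral\<^sup>L D (g j)}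
               \<union> {xs \<in> space (PiM {..<T} (\<lambda>_. D)). eps j \<le> (\<Sum>t<T. (\<lambda>x. - g j x) (xs t)) / T - integral\<^sup>L D (\<lambda>x. - g j x)}" for j
    have bs: "bad j \<in> sets (PiM {..<T} (\<lambda>_. D))" for j
      unfolding bad_def g_def eps_def by (rule bad_j(1)[OF D S T m i L])
    have bm: "measure (PiM {..<T} (\<lambda>_. D)) (bad j) \<le> 2 * exp (- L)" for j
      unfolding bad_def g_def eps_def by (rule bad_j(2)[OF D S T m i L])
    have Bs: "(\<Union>j\<in>{0..m}. bad j) \<in> sets (PiM {..<T} (\<lambda>_. D))" using bs by auto
    have "measure (PiM {..<T} (\<lambda>_. D)) (\<Union>j\<in>{0..m}. bad j) \<le> (\<Sum>j\<in>{0..m}. measure (PiM {..<T} (\<lambda>_. D)) (bad j))"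
      by (rule measure_UNION_le) (use bs in auto)
    also have "\<dots> \<le> (\<Sum>j\<in>{0..m}. 2 * exp (- L))" by (rule sum_mono) (rule bm)
    also have "\<dots> = real (m + 1) * (2 * exp (- L))" by simp
    also have "\<dots> = \<delta>"
    proof -
      have "exp (- L) = \<delta> / (2 * real (m + 1))" unfolding L_def using d0
        by (simp add: exp_minus)
      then show ?thesis by (simp add: field_simps)
    qed
    finally have Bm: "measure (PiM {..<T} (\<lambda>_. D)) (\<Union>j\<in>{0..m}. bad j) \<le> \<delta>" .
    have sub: "space (PiM {..<T} (\<lambda>_. D)) - (\<Union>j\<in>{0..m}. bad j) \<subseteq>
      {xs \<in> space (PiM {..<T} (\<lambda>_. D)). \<bar>SCFDL (expS T xs) m i - SCFDL (expD D) m i\<bar> \<le> R}"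
    proof
      fix xs assume xs: "xs \<in> space (PiM {..<T} (\<lambda>_. D)) - (\<Union>j\<in>{0..m}. bad j)"
      have dev: "\<bar>Fw (expS T xs) m j (cc m i j) - Fw (expD D) m j (cc m i j)\<bar>
          \<le> sqrt (piw (expD D) m j * (16 * L / T)) + 8 * L / T" if j: "j \<le> m" for j
      proof -
        have nb: "xs \<notin> bad j" using xs j by auto
        have F1: "Fw (expS T xs) m j (cc m i j) = (\<Sum>t<T. g j (xs t)) / T"
          unfolding Fw_def expS_def g_def ..
        have F2: "Fw (expD D) m j (cc m i j) = integral\<^sup>L D (g j)"
          unfolding Fw_def expD_def g_def ..
        have neg: "(\<Sum>t<T. (\<lambda>x. - g j x) (xs t)) / T - integral\<^sup>L D (\<lambda>x. - g j x)
            = - ((\<Sum>t<T. g j (xs t)) / T - integral\<^sup>L D (g j))"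
          by (simp add: sum_negf)
        have n1: "\<not> eps j \<le> (\<Sum>t<T. g j (xs t)) / T - integral\<^sup>L D (g j)"
          and n2: "\<not> eps j \<le> (\<Sum>t<T. (\<lambda>x. - g j x) (xs t)) / T - integral\<^sup>L D (\<lambda>x. - g j x)"
          using nb xs unfolding bad_def by blast+
        from n1 n2[unfolded neg] show ?thesis unfolding F1 F2 eps_def[symmetric] by linarith
      qed
      have a: "0 < 16 * L / real T" using L T by simp
      have b: "0 \<le> 8 * L / real T" using L T by simp
      have P1: "\<And>j. piw (expD D) m j \<le> 1" by (rule piw_expD_le1[OF D S])
      have "\<bar>SCFDL (expS T xs) m i - SCFDL (expD D) m i\<bar> \<le>
          3 * (sqrt (16 * L / T) + 8 * L / T) + real (m + 1) * (8 * L / T)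
           + 12 * (16 * L / T * real m) * ln (real m) + 8 * ln (real m) * sqrt (16 * L / T * real m * SCDL (expD D) m)"
        by (rule det_final[OF gS gD m2 i a b P1 dev])
      also have "\<dots> \<le> R" unfolding R_def L_def
        by (rule numeric[OF m2 T d0 d1 SCDL_nonneg[OF gD]])
      finally show "xs \<in> {xs \<in> space (PiM {..<T} (\<lambda>_. D)). \<bar>SCFDL (expS T xs) m i - SCFDL (expD D) m i\<bar> \<le> R}"
        using xs by auto
    qed
    have "measure (PiM {..<T} (\<lambda>_. D)) (space (PiM {..<T} (\<lambda>_. D)) - (\<Union>j\<in>{0..m}. bad j))
        = 1 - measure (PiM {..<T} (\<lambda>_. D)) (\<Union>j\<in>{0..m}. bad j)"
      by (rule P.prob_compl[OF Bs])
    moreover have "measure (PiM {..<T} (\<lambda>_. D)) (space (PiM {..<T} (\<lambda>_. D)) - (\<Union>j\<in>{0..m}. bad j))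
        \<le> measure (PiM {..<T} (\<lambda>_. D)) {xs \<in> space (PiM {..<T} (\<lambda>_. D)). \<bar>SCFDL (expS T xs) m i - SCFDL (expD D) m i\<bar> \<le> R}"
      by (rule P.finite_measure_mono[OF sub Ameas])
    ultimately show ?thesis using Bm by linarith
  qed
  then show "measure (PiM {..<T} (\<lambda>_. D))
       {xs \<in> space (PiM {..<T} (\<lambda>_. D)).
          \<bar>SCFDL (expS T xs) m i - SCFDL (expD D) m i\<bar>
            \<le> 1000 * (sqrt (ln (1 / \<delta>) / real T)
                   + ln (real m) * sqrt (real m * SCDL (expD D) m * ln (1 / \<delta>) / real T)
                   + real m * ln (real m) * ln (1 / \<delta>) / real T)}
       \<ge> 1 - \<delta>" unfolding R_def by simp
qed


end
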